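(* Let a loop-tangle diagram be minimal, i.e. the disc bounded by its loop contains no $1$-sided and no $2$-sided faces. Then inside the disc there is at least one of the following: a triangular face one of whose sides is a connected subarc of the loop; two triangular faces sharing a side; a quadrilateral face sharing at least one side with a triangular face; or a pentagonal face sharing at least four of its sides with triangular faces.
   Context: In an oriented knot diagram, a loop is a subarc $\gamma^\dagger$ of the knot such that (1) $\gamma^\dagger$ has exactly one self-crossing $u$, forming a loop bounding a disc $R$; (2) apart from $u$, at every crossing $\gamma^\dagger$ meets, $\gamma^\dagger$ is the under-strand (or at every such crossing it is the over-strand); (3) the two edges incident to $u$ not on the loop lie outside $R$. The tangle consists of the arcs of the knot inside $R$, each crossing the loop at its two endpoints; loop plus tangle is the loop-tangle diagram. Its faces are the faces inside $R$ of the planar $4$-valent graph formed by the loop and tangle (vertices: $u$, crossings of the tangle with the loop, and crossings of the tangle inside $R$); an $N$-sided face (triangle for $N=3$, quadrilateral for $N=4$, pentagon for $N=5$) is one bounded by $N$ edges. *)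

theory Defs
  imports Main
begin

text \<open>
The planar 4-valent graph formed by the loop and the tangle inside the disc R is
encoded as a connected planar combinatorial map (darts D, fixed-point-free edge
involution alpha, vertex rotation sigma, faces = orbits of sigma o alpha), in which the
whole exterior of R is collapsed to a single distinguished face Ext whose boundary is the loop.
\<close>

definition orb :: "('a \<Rightarrow> 'a) \<Rightarrow> 'a \<Rightarrow> 'a set" where
  "orb f x = range (\<lambda>n. (f ^^ n) x)"

definition verts :: "'a set \<Rightarrow> ('a \<Rightarrow> 'a) \<Rightarrow> 'a set set" where
  "verts D \<sigma> = orb \<sigma> ` D"

definition edges :: "'a set \<Rightarrow> ('a \<Rightarrow> 'a) \<Rightarrow> 'a set set" where
  "edges D \<alpha> = orb \<alpha> ` D"

definition face_of :: "('a \<Rightarrow> 'a) \<Rightarrow> ('a \<Rightarrow> 'a) \<Rightarrow> 'a \<Rightarrow> 'a set" where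
  "face_of \<alpha> \<sigma> d = orb (\<sigma> \<circ> \<alpha>) d"

definition faces :: "'a set \<Rightarrow> ('a \<Rightarrow> 'a) \<Rightarrow> ('a \<Rightarrow> 'a) \<Rightarrow> 'a set set" where
  "faces D \<alpha> \<sigma> = face_of \<alpha> \<sigma> ` D"

definition combinatorial_map :: "'a set \<Rightarrow> ('a \<Rightarrow> 'a) \<Rightarrow> ('a \<Rightarrow> 'a) \<Rightarrow> bool" where
  "combinatorial_map D \<alpha> \<sigma> \<longleftrightarrow>
     finite D \<and> bij_betw \<alpha> D D \<and> bij_betw \<sigma> D D \<and>
     (\<forall>d\<in>D. \<alpha> d \<noteq> d \<and> \<alpha> (\<alpha> d) = d)"

definition connected_map :: "'a set \<Rightarrow> ('a \<Rightarrow> 'a) \<Rightarrow> ('a \<Rightarrow> 'a) \<Rightarrow> bool" where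
  "connected_map D \<alpha> \<sigma> \<longleftrightarrow>
     (\<forall>x\<in>D. \<forall>y\<in>D. (x, y) \<in> {(a, b). a \<in> D \<and> (b = \<alpha> a \<or> b = \<sigma> a)}\<^sup>*)"

definition planar_map :: "'a set \<Rightarrow> ('a \<Rightarrow> 'a) \<Rightarrow> ('a \<Rightarrow> 'a) \<Rightarrow> bool" where
  "planar_map D \<alpha> \<sigma> \<longleftrightarrow>
     combinatorial_map D \<alpha> \<sigma> \<and> connected_map D \<alpha> \<sigma> \<and>
     int (card (verts D \<sigma>)) - int (card (edges D \<alpha>)) + int (card (faces D \<alpha> \<sigma>)) = 2"

definition on_loop :: "('a \<Rightarrow> 'a) \<Rightarrow> 'a set \<Rightarrow> 'a \<Rightarrow> bool" where
  "on_loop \<sigma> Ext d \<longleftrightarrow> orb \<sigma> d \<inter> Ext \<noteq> {}"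

text \<open>Tangle darts: darts of edges not on the loop.  Straight-ahead continuation
  of a strand through a 4-valent crossing: the opposite dart.\<close>
definition tangle_dart :: "'a set \<Rightarrow> ('a \<Rightarrow> 'a) \<Rightarrow> 'a set \<Rightarrow> 'a \<Rightarrow> bool" where
  "tangle_dart D \<alpha> Ext d \<longleftrightarrow> d \<in> D \<and> d \<notin> Ext \<and> \<alpha> d \<notin> Ext"

definition straight :: "('a \<Rightarrow> 'a) \<Rightarrow> ('a \<Rightarrow> 'a) \<Rightarrow> 'a \<Rightarrow> 'a" where
  "straight \<alpha> \<sigma> d = \<sigma> (\<sigma> (\<alpha> d))"

text \<open>Loop-tangle diagram:
  \<^item> planar map, Ext is a face (the exterior of the disc R);
  \<^item> the loop (boundary of Ext) is a simple closed curve: no edge has Ext on both sides,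
    and the vertices met along Ext are pairwise distinct;
  \<^item> vertices on the loop have degree 3 inside R (tangle endpoints), except exactly
    one of degree 2 (the self-crossing u, whose other two edges lie outside R);
  \<^item> vertices inside R are 4-valent crossings;
  \<^item> the tangle consists of arcs: following any tangle strand straight ahead through
    crossings always reaches the loop (no closed components).\<close>
definition loop_tangle_map :: "'a set \<Rightarrow> ('a \<Rightarrow> 'a) \<Rightarrow> ('a \<Rightarrow> 'a) \<Rightarrow> 'a set \<Rightarrow> bool" where
  "loop_tangle_map D \<alpha> \<sigma> Ext \<longleftrightarrow>
     planar_map D \<alpha> \<sigma> \<and>
     Ext \<in> faces D \<alpha> \<sigma> \<and>
     (\<forall>d\<in>Ext. \<alpha> d \<notin> Ext) \<and>
     inj_on (orb \<sigma>) Ext \<and>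
     (\<forall>d\<in>Ext. card (orb \<sigma> d) \<in> {2, 3}) \<and>
     card {v \<in> verts D \<sigma>. v \<inter> Ext \<noteq> {} \<and> card v = 2} = 1 \<and>
     (\<forall>d\<in>D. \<not> on_loop \<sigma> Ext d \<longrightarrow> card (orb \<sigma> d) = 4) \<and>
     (\<forall>d. tangle_dart D \<alpha> Ext d \<longrightarrow>
        (\<exists>n. on_loop \<sigma> Ext (\<alpha> ((straight \<alpha> \<sigma> ^^ n) d))))"

definition inner_faces :: "'a set \<Rightarrow> ('a \<Rightarrow> 'a) \<Rightarrow> ('a \<Rightarrow> 'a) \<Rightarrow> 'a set \<Rightarrow> 'a set set" where
  "inner_faces D \<alpha> \<sigma> Ext = faces D \<alpha> \<sigma> - {Ext}"

text \<open>Minimal: no 1-sided and no 2-sided faces inside R.  The number of sides of a face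
  is the length of its boundary walk, i.e. the number of darts in the orbit.\<close>
definition minimal_ltd :: "'a set \<Rightarrow> ('a \<Rightarrow> 'a) \<Rightarrow> ('a \<Rightarrow> 'a) \<Rightarrow> 'a set \<Rightarrow> bool" where
  "minimal_ltd D \<alpha> \<sigma> Ext \<longleftrightarrow> (\<forall>F\<in>inner_faces D \<alpha> \<sigma> Ext. card F \<noteq> 1 \<and> card F \<noteq> 2)"

definition share_side :: "('a \<Rightarrow> 'a) \<Rightarrow> 'a set \<Rightarrow> 'a set \<Rightarrow> bool" where
  "share_side \<alpha> F G \<longleftrightarrow> (\<exists>d\<in>F. \<alpha> d \<in> G)"

end

theory Submission
  imports Defs
begin

lemma orb_iff: "y \<in> orb f x \<longleftrightarrow> (\<exists>n. y = (f ^^ n) x)"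
  unfolding orb_def by auto

lemma self_in_orb: "x \<in> orb f x"
  unfolding orb_def by (metis funpow_0 rangeI)

lemma funpow_in:
  assumes "bij_betw f D D" "x \<in> D" shows "(f ^^ n) x \<in> D"
  using assms by (induction n) (auto simp: bij_betw_def)

lemma orb_subset:
  assumes "bij_betw f D D" "x \<in> D" shows "orb f x \<subseteq> D"
  using funpow_in[OF assms] unfolding orb_def by auto

lemma funpow_cancel:
  assumes "bij_betw f D D" "a \<in> D" "b \<in> D" "(f ^^ n) a = (f ^^ n) b"
  shows "a = b"
  using assms(4)
proof (induction n)
  case 0 then show ?case by simp
next
  case (Suc n)
  have "f ((f ^^ n) a) = f ((f ^^ n) b)" using Suc.prems by simp
  then have "(f ^^ n) a = (f ^^ n) b"
    using assms(1) funpow_in[OF assms(1) assms(2)] funpow_in[OF assms(1) assms(3)]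
    unfolding bij_betw_def inj_on_def by blast
  then show ?case by (rule Suc.IH)
qed

lemma periodic:
  assumes "bij_betw f D D" "finite D" "x \<in> D"
  shows "\<exists>p>0. (f ^^ p) x = x"
proof -
  let ?g = "\<lambda>n. (f ^^ n) x"
  have sub: "?g ` {..card D} \<subseteq> D" using funpow_in[OF assms(1,3)] by auto
  have "\<not> inj_on ?g {..card D}"
  proof
    assume "inj_on ?g {..card D}"
    then have "card (?g ` {..card D}) = Suc (card D)" by (simp add: card_image)
    moreover have "card (?g ` {..card D}) \<le> card D" using sub assms(2) card_mono by blast
    ultimately show False by simp
  qed
  then obtain i j where ij: "i \<noteq> j" "?g i = ?g j" unfolding inj_on_def by blast
  { fix i j assume ij': "i < j" "?g i = ?g j"
    have "(f ^^ j) x = (f ^^ (i + (j - i))) x" using ij'(1) by simp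
    also have "\<dots> = (f ^^ i) ((f ^^ (j - i)) x)" by (simp add: funpow_add)
    finally have "(f ^^ i) ((f ^^ (j - i)) x) = (f ^^ i) x" using ij'(2) by simp
    then have "(f ^^ (j - i)) x = x"
      using funpow_cancel[OF assms(1) funpow_in[OF assms(1,3)] assms(3)] by blast
    then have "\<exists>p>0. (f ^^ p) x = x" using ij'(1) by (intro exI[of _ "j - i"]) auto }
  note * = this
  have "i < j \<or> j < i" using ij(1) by arith
  then show ?thesis using *[of i j] *[of j i] ij(2) by auto
qed

lemma funpow_mult_period: "(f ^^ p) x = x \<Longrightarrow> (f ^^ (p * m)) x = x"
proof (induction m)
  case 0 then show ?case by simp
next
  case (Suc m)
  have "(f ^^ (p * Suc m)) x = (f ^^ p) ((f ^^ (p * m)) x)"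
    by (simp add: funpow_add)
  then show ?case using Suc by simp
qed

lemma orb_trans: assumes "y \<in> orb f x" shows "orb f y \<subseteq> orb f x"
proof
  fix z assume z: "z \<in> orb f y"
  note y = assms
  obtain m where m: "y = (f ^^ m) x" using y orb_iff by metis
  obtain n where n: "z = (f ^^ n) y" using z orb_iff by metis
  have "z = (f ^^ (n + m)) x" using m n by (simp add: funpow_add)
  then show "z \<in> orb f x" unfolding orb_iff by blast
qed

lemma orb_sym:
  assumes "bij_betw f D D" "finite D" "x \<in> D" "y \<in> orb f x"
  shows "x \<in> orb f y"
proof -
  obtain m where m: "y = (f ^^ m) x" using assms(4) orb_iff by metis
  obtain p where p: "p > 0" "(f ^^ p) x = x" using periodic[OF assms(1-3)] by blast
  have "(f ^^ (p * m)) x = x" using funpow_mult_period p by metis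
  moreover have "p * m = (p * m - m) + m" using p by simp
  moreover have "(f ^^ (p * m - m)) y = (f ^^ (p * m - m + m)) x" using m by (simp add: funpow_add)
  ultimately have "(f ^^ (p * m - m)) y = x" by simp
  then show ?thesis unfolding orb_iff by metis
qed

lemma orb_eq:
  assumes "bij_betw f D D" "finite D" "x \<in> D" "y \<in> orb f x"
  shows "orb f y = orb f x"
  using orb_trans[OF assms(4)] orb_trans[OF orb_sym[OF assms]] by blast

lemma orb_disj:
  assumes "bij_betw f D D" "finite D" "x \<in> D" "y \<in> D" "orb f x \<noteq> orb f y"
  shows "orb f x \<inter> orb f y = {}"
  using orb_eq[OF assms(1,2,3)] orb_eq[OF assms(1,2,4)] assms(5) by blast

lemma orb_sum:
  assumes "bij_betw f D D" "finite D"
  shows "(\<Sum>v\<in>orb f ` D. card v) = card D"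
proof -
  have U: "\<Union>(orb f ` D) = D"
  proof
    show "\<Union>(orb f ` D) \<subseteq> D" using orb_subset[OF assms(1)] by blast
    show "D \<subseteq> \<Union>(orb f ` D)"
    proof
      fix x assume "x \<in> D" then show "x \<in> \<Union>(orb f ` D)" using self_in_orb[of x f] by blast
    qed
  qed
  have pw: "pairwise disjnt (orb f ` D)"
  proof (rule pairwiseI)
    fix A B assume A: "A \<in> orb f ` D" and B: "B \<in> orb f ` D" and ne: "A \<noteq> B"
    obtain x where x: "x \<in> D" "A = orb f x" using A by blast
    obtain y where y: "y \<in> D" "B = orb f y" using B by blast
    have "orb f x \<inter> orb f y = {}" using orb_disj[OF assms x(1) y(1)] ne x(2) y(2) by simp
    then show "disjnt A B" unfolding disjnt_def using x(2) y(2) by simp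
  qed
  have fin: "finite A" if Ain: "A \<in> orb f ` D" for A
  proof -
    obtain x where x: "x \<in> D" "A = orb f x" using Ain by blast
    then show ?thesis using orb_subset[OF assms(1) x(1)] assms(2) finite_subset by metis
  qed
  have "card (\<Union>(orb f ` D)) = (\<Sum>v\<in>orb f ` D. card v)"
    using card_Union_disjoint[OF pw] fin assms(2) by simp
  then show ?thesis using U by simp
qed

lemma orb_fix: "f x = x \<Longrightarrow> orb f x = {x}"
proof -
  assume a: "f x = x"
  have "(f ^^ n) x = x" for n by (induction n) (simp_all add: a)
  then show ?thesis unfolding orb_def by auto
qed

lemma orb_period2: "f (f x) = x \<Longrightarrow> orb f x \<subseteq> {x, f x}"
proof -
  assume a: "f (f x) = x"
  have "(f ^^ n) x \<in> {x, f x}" for n by (induction n) (auto simp: a)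
  then show ?thesis unfolding orb_def by auto
qed

lemma orb_period2_eq: assumes "f (f x) = x" shows "orb f x = {x, f x}"
proof -
  have "f x = (f ^^ 1) x" by simp
  then have "f x \<in> orb f x" unfolding orb_iff by blast
  then show ?thesis using orb_period2[of f x, OF assms] self_in_orb[of x f] by blast
qed



lemma face_of_orb: "face_of \<alpha> \<sigma> = orb (\<sigma> \<circ> \<alpha>)"
  unfolding face_of_def by auto

lemma faces_orb: "faces D \<alpha> \<sigma> = orb (\<sigma> \<circ> \<alpha>) ` D"
  unfolding faces_def face_of_orb by simp

lemma cm_facts:
  assumes "combinatorial_map D \<alpha> \<sigma>"
  shows "finite D" "bij_betw \<alpha> D D" "bij_betw \<sigma> D D" "bij_betw (\<sigma> \<circ> \<alpha>) D D"
    "\<And>d. d \<in> D \<Longrightarrow> \<alpha> d \<noteq> d" "\<And>d. d \<in> D \<Longrightarrow> \<alpha> (\<alpha> d) = d"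
  using assms unfolding combinatorial_map_def by (auto intro: bij_betw_trans)

lemma lt_facts:
  assumes "loop_tangle_map D \<alpha> \<sigma> Ext"
  shows "planar_map D \<alpha> \<sigma>" "Ext \<in> faces D \<alpha> \<sigma>" "inj_on (orb \<sigma>) Ext"
    "\<And>d. d \<in> Ext \<Longrightarrow> card (orb \<sigma> d) \<in> {2, 3}"
    "card {v \<in> verts D \<sigma>. v \<inter> Ext \<noteq> {} \<and> card v = 2} = 1"
    "\<And>d. d \<in> D \<Longrightarrow> \<not> on_loop \<sigma> Ext d \<Longrightarrow> card (orb \<sigma> d) = 4"
    "combinatorial_map D \<alpha> \<sigma>"
  using assms unfolding loop_tangle_map_def planar_map_def by ((elim conjE), simp)+

lemma sigma_nofix:
  assumes lt: "loop_tangle_map D \<alpha> \<sigma> Ext" and d: "d \<in> D"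
  shows "\<sigma> d \<noteq> d"
proof
  assume fx: "\<sigma> d = d"
  have cm: "combinatorial_map D \<alpha> \<sigma>" using lt_facts(7)[OF lt] .
  note c = cm_facts[OF cm]
  have o1: "orb \<sigma> d = {d}" using orb_fix fx by metis
  have ExtD: "Ext \<subseteq> D"
  proof -
    obtain x where "x \<in> D" "Ext = orb (\<sigma> \<circ> \<alpha>) x"
      using lt_facts(2)[OF lt] unfolding faces_orb by blast
    then show ?thesis using orb_subset[OF c(4)] by blast
  qed
  show False
  proof (cases "on_loop \<sigma> Ext d")
    case True
    then obtain e where e: "e \<in> Ext" "e \<in> orb \<sigma> d" unfolding on_loop_def by blast
    then have "orb \<sigma> e = orb \<sigma> d" using orb_eq[OF c(3) c(1) d] by blast
    moreover have "card (orb \<sigma> e) \<in> {2,3}" using lt_facts(4)[OF lt e(1)] .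
    ultimately show False using o1 by simp
  next
    case False
    then have "card (orb \<sigma> d) = 4" using lt_facts(6)[OF lt d] by blast
    then show False using o1 by simp
  qed
qed

lemma tri_no_self:
  assumes lt: "loop_tangle_map D \<alpha> \<sigma> Ext" and y: "y \<in> D"
    and c3: "card (orb (\<sigma> \<circ> \<alpha>) y) = 3" and ay: "\<alpha> y \<in> orb (\<sigma> \<circ> \<alpha>) y"
  shows False
proof -
  have cm: "combinatorial_map D \<alpha> \<sigma>" using lt_facts(7)[OF lt] .
  note c = cm_facts[OF cm]
  define \<phi> where "\<phi> = \<sigma> \<circ> \<alpha>"
  note bp = c(4)[folded \<phi>_def]
  let ?T = "orb \<phi> y"
  have inj: "\<And>a b. a \<in> D \<Longrightarrow> b \<in> D \<Longrightarrow> \<phi> a = \<phi> b \<Longrightarrow> a = b"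
    using bp unfolding bij_betw_def inj_on_def by blast
  have yD1: "\<phi> y \<in> D" "\<phi> (\<phi> y) \<in> D" using bp y by (auto simp: bij_betw_def)
  have n1: "\<phi> y \<noteq> y"
  proof
    assume "\<phi> y = y" then have "?T = {y}" using orb_fix by metis
    then show False using c3 \<phi>_def by simp
  qed
  have n2: "\<phi> (\<phi> y) \<noteq> y"
  proof
    assume "\<phi> (\<phi> y) = y" then have "?T \<subseteq> {y, \<phi> y}" using orb_period2 by metis
    then have "card ?T \<le> 2" by (metis card_2_iff card_insert_le_m1 card_mono finite.emptyI finite.insertI
          le_SucI numeral_2_eq_2 one_le_numeral card_insert_if  insert_absorb card.empty)
    then show False using c3 \<phi>_def by simp
  qed
  have n3: "\<phi> (\<phi> y) \<noteq> \<phi> y" using inj[OF yD1(1) y] n1 by metis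
  have mem: "\<phi> y \<in> ?T" "\<phi> (\<phi> y) \<in> ?T" "(\<phi> ^^ 3) y \<in> ?T"
    unfolding orb_iff
    by (metis funpow_0 funpow.simps(2) comp_apply, metis funpow_0 funpow.simps(2) comp_apply, blast)
  have sub: "{y, \<phi> y, \<phi> (\<phi> y)} \<subseteq> ?T" using mem self_in_orb[of y \<phi>] by blast
  have fin: "finite ?T" using orb_subset[OF bp y] c(1) finite_subset by blast
  have "card {y, \<phi> y, \<phi> (\<phi> y)} = 3" using n1 n2 n3 by auto
  then have Teq: "?T = {y, \<phi> y, \<phi> (\<phi> y)}" using card_subset_eq[OF fin sub] c3 \<phi>_def by simp
  have p3: "(\<phi> ^^ 3) y = \<phi> (\<phi> (\<phi> y))" by (simp add: numeral_3_eq_3)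
  have "\<phi> (\<phi> (\<phi> y)) \<noteq> \<phi> y"
    using inj[OF yD1(2) y] n2 by blast
  moreover have "\<phi> (\<phi> (\<phi> y)) \<noteq> \<phi> (\<phi> y)"
    using inj[OF yD1(2) yD1(1)] inj[OF yD1(1) y] n1 by metis
  ultimately have cyc: "\<phi> (\<phi> (\<phi> y)) = y" using mem(3) Teq p3 by auto
  have ayD: "\<alpha> y \<in> D" using c(2) y by (auto simp: bij_betw_def)
  have "\<alpha> y \<in> {y, \<phi> y, \<phi> (\<phi> y)}" using ay Teq \<phi>_def by simp
  moreover have "\<alpha> y \<noteq> y" using c(5) y by blast
  moreover have "\<alpha> y \<noteq> \<phi> y"
    using sigma_nofix[OF lt ayD] unfolding \<phi>_def by auto
  moreover have "\<alpha> y \<noteq> \<phi> (\<phi> y)"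
  proof
    assume h: "\<alpha> y = \<phi> (\<phi> y)"
    then have "\<phi> (\<alpha> y) = y" using cyc by simp
    then have "\<sigma> y = y" using c(6)[OF y] unfolding \<phi>_def by simp
    then show False using sigma_nofix[OF lt y] by blast
  qed
  ultimately show False by blast
qed



lemma euler_count:
  assumes lt: "loop_tangle_map D \<alpha> \<sigma> Ext"
  shows "(\<Sum>f\<in>inner_faces D \<alpha> \<sigma> Ext. 4 - int (card f)) = 3"
proof -
  have pm: "planar_map D \<alpha> \<sigma>" using lt_facts(1)[OF lt] .
  have cm: "combinatorial_map D \<alpha> \<sigma>" using pm unfolding planar_map_def by blast
  note c = cm_facts[OF cm]
  have eul: "int (card (verts D \<sigma>)) - int (card (edges D \<alpha>)) + int (card (faces D \<alpha> \<sigma>)) = 2"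
    using pm unfolding planar_map_def by blast
  have ExtF: "Ext \<in> faces D \<alpha> \<sigma>" using lt_facts(2)[OF lt] .
  have ExtD: "Ext \<subseteq> D" using ExtF orb_subset[OF c(4)] unfolding faces_orb by blast
  have finF: "finite (faces D \<alpha> \<sigma>)" using c(1) unfolding faces_orb by simp
  have sF: "(\<Sum>f\<in>faces D \<alpha> \<sigma>. card f) = card D" unfolding faces_orb using orb_sum[OF c(4) c(1)] .
  have sI: "(\<Sum>f\<in>inner_faces D \<alpha> \<sigma> Ext. card f) + card Ext = card D"
    using sF sum.remove[OF finF ExtF, of card] unfolding inner_faces_def by simp
  have cI: "card (inner_faces D \<alpha> \<sigma> Ext) + 1 = card (faces D \<alpha> \<sigma>)"
    unfolding inner_faces_def using finF ExtF
  proof -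
    have "card (faces D \<alpha> \<sigma> - {Ext}) = card (faces D \<alpha> \<sigma>) - 1" using card_Diff_singleton[OF ExtF] .
    moreover have "card (faces D \<alpha> \<sigma>) > 0" using finF ExtF card_gt_0_iff by blast
    ultimately show "card (faces D \<alpha> \<sigma> - {Ext}) + 1 = card (faces D \<alpha> \<sigma>)" by simp
  qed
  have sE: "(\<Sum>e\<in>edges D \<alpha>. card e) = card D" unfolding edges_def using orb_sum[OF c(2) c(1)] .
  have e2: "card e = 2" if eE: "e \<in> edges D \<alpha>" for e
  proof -
    obtain d where d: "d \<in> D" "e = orb \<alpha> d" using eE unfolding edges_def by blast
    then have "e = {d, \<alpha> d}" using orb_period2_eq c(6) by metis
    then show ?thesis using c(5)[OF d(1)] by simp
  qed
  have cE: "card D = 2 * card (edges D \<alpha>)" using sE e2 by simp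
  define V where "V = verts D \<sigma>"
  define L where "L = orb \<sigma> ` Ext"
  have finV: "finite V" unfolding V_def verts_def using c(1) by simp
  have LV: "L \<subseteq> V" unfolding L_def V_def verts_def using ExtD by blast
  have sV: "(\<Sum>v\<in>V. card v) = card D" unfolding V_def verts_def using orb_sum[OF c(3) c(1)] .
  have cL: "card L = card Ext" unfolding L_def using card_image[OF lt_facts(3)[OF lt]] .
  have L23: "card v \<in> {2,3}" if vL: "v \<in> L" for v
  proof -
    obtain e where "e \<in> Ext" "v = orb \<sigma> e" using vL unfolding L_def by blast
    then show ?thesis using lt_facts(4)[OF lt] by simp
  qed
  have meetL: "v \<in> L" if vV: "v \<in> V" "v \<inter> Ext \<noteq> {}" for v
  proof -
    obtain d where d: "d \<in> D" "v = orb \<sigma> d" using vV(1) unfolding V_def verts_def by blast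
    obtain e where e: "e \<in> v" "e \<in> Ext" using vV(2) by blast
    have "orb \<sigma> e = v" using orb_eq[OF c(3) c(1) d(1)] e d(2) by blast
    then show ?thesis unfolding L_def using e(2) by blast
  qed
  have Lmeet: "v \<inter> Ext \<noteq> {}" if vL: "v \<in> L" for v
  proof -
    obtain e where "e \<in> Ext" "v = orb \<sigma> e" using vL unfolding L_def by blast
    then show ?thesis using self_in_orb[of e \<sigma>] by blast
  qed
  have V4: "card v = 4" if vVL: "v \<in> V - L" for v
  proof -
    obtain d where d: "d \<in> D" "v = orb \<sigma> d" using vVL unfolding V_def verts_def by blast
    have "\<not> on_loop \<sigma> Ext d" using vVL meetL d unfolding on_loop_def by blast
    then show ?thesis using lt_facts(6)[OF lt d(1)] d(2) by simp
  qed
  have Seq: "{v \<in> verts D \<sigma>. v \<inter> Ext \<noteq> {} \<and> card v = 2} = {v\<in>L. card v = 2}"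
    using meetL Lmeet LV unfolding V_def by blast
  have cS: "card {v\<in>L. card v = 2} = 1" using lt_facts(5)[OF lt] Seq by simp
  have finL: "finite L" using finV LV finite_subset by blast
  have "(\<Sum>v\<in>L. card v + (if card v = 2 then 1 else 0)) = (\<Sum>v\<in>L. 3)"
    by (rule sum.cong) (use L23 in auto)
  moreover have "(\<Sum>v\<in>L. (if card v = 2 then 1 else 0)) = card {v\<in>L. card v = 2}"
    using sum.inter_filter[OF finL, of "\<lambda>_. 1::nat" "\<lambda>v. card v = 2"] by simp
  ultimately have sL: "(\<Sum>v\<in>L. card v) + 1 = 3 * card L"
    using cS by (simp add: sum.distrib)
  have sVL: "(\<Sum>v\<in>V - L. card v) = 4 * card (V - L)" using V4 by simp
  have "(\<Sum>v\<in>V. card v) = (\<Sum>v\<in>V - L. card v) + (\<Sum>v\<in>L. card v)"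
    using sum.subset_diff[OF LV finV] by simp
  then have vv: "card D + 1 = 4 * card (V - L) + 3 * card Ext" using sV sL sVL cL by simp
  have cV: "card V = card (V - L) + card L" using card_Diff_subset[OF finL LV] card_mono[OF finV LV] by simp
  have "(\<Sum>f\<in>inner_faces D \<alpha> \<sigma> Ext. 4 - int (card f))
      = 4 * int (card (inner_faces D \<alpha> \<sigma> Ext)) - int (\<Sum>f\<in>inner_faces D \<alpha> \<sigma> Ext. card f)"
    by (simp add: sum_subtractf of_nat_sum)
  also have "\<dots> = 3"
    using eul cI sI cE vv cV cL unfolding V_def by linarith
  finally show ?thesis .
qed



theorem proposition5p12:
  fixes D :: "'d set" and \<alpha> \<sigma> :: "'d \<Rightarrow> 'd" and Ext :: "'d set"
  assumes "loop_tangle_map D \<alpha> \<sigma> Ext"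
    and "minimal_ltd D \<alpha> \<sigma> Ext"
  shows "(\<exists>T\<in>inner_faces D \<alpha> \<sigma> Ext. card T = 3 \<and> share_side \<alpha> T Ext)
       \<or> (\<exists>T1\<in>inner_faces D \<alpha> \<sigma> Ext. \<exists>T2\<in>inner_faces D \<alpha> \<sigma> Ext.
            T1 \<noteq> T2 \<and> card T1 = 3 \<and> card T2 = 3 \<and> share_side \<alpha> T1 T2)
       \<or> (\<exists>Q\<in>inner_faces D \<alpha> \<sigma> Ext. \<exists>T\<in>inner_faces D \<alpha> \<sigma> Ext.
            card Q = 4 \<and> card T = 3 \<and> share_side \<alpha> Q T)
       \<or> (\<exists>P\<in>inner_faces D \<alpha> \<sigma> Ext. card P = 5 \<and>
            card {d \<in> P. face_of \<alpha> \<sigma> (\<alpha> d) \<in> inner_faces D \<alpha> \<sigma> Ext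
                        \<and> card (face_of \<alpha> \<sigma> (\<alpha> d)) = 3} \<ge> 4)"
proof (rule ccontr)
  assume neg: "\<not> ?thesis"
  note lt = assms(1)
  have cm: "combinatorial_map D \<alpha> \<sigma>" using lt_facts(7)[OF lt] .
  note c = cm_facts[OF cm]
  define I where "I = inner_faces D \<alpha> \<sigma> Ext"
  define F where "F = faces D \<alpha> \<sigma>"
  define fo where "fo = face_of \<alpha> \<sigma>"
  have fo_orb: "fo = orb (\<sigma> \<circ> \<alpha>)" unfolding fo_def face_of_orb ..
  have F_def': "F = fo ` D" unfolding F_def fo_def faces_def ..
  have IF: "I \<subseteq> F" unfolding I_def F_def inner_faces_def by blast
  have finF: "finite F" unfolding F_def' using c(1) by simp
  have finI: "finite I" using finF IF finite_subset by blast
  have ExtF: "Ext \<in> F" using lt_facts(2)[OF lt] unfolding F_def .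
  have foD: "fo d \<subseteq> D" if "d \<in> D" for d using orb_subset[OF c(4) that] fo_orb by simp
  have fo_self: "d \<in> fo d" for d using self_in_orb fo_orb by metis
  have fo_eq: "fo e = fo d" if "d \<in> D" "e \<in> fo d" for d e
    using orb_eq[OF c(4) c(1) that(1)] that(2) fo_orb by simp
  have fin_face: "finite f" if "f \<in> F" for f
    using that foD c(1) finite_subset unfolding F_def' by blast
  have face_rep: "f = fo d" if "f \<in> F" "d \<in> f" for f d
    using that fo_eq unfolding F_def' by blast
  have Fdisj: "f \<inter> g = {}" if "f \<in> F" "g \<in> F" "f \<noteq> g" for f g
    using that face_rep by blast
  have FD: "f \<subseteq> D" if "f \<in> F" for f using that foD unfolding F_def' by blast
  have I3: "card f \<ge> 3" if "f \<in> I" for f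
  proof -
    have "card f \<noteq> 1" "card f \<noteq> 2" using assms(2) that unfolding minimal_ltd_def I_def by auto
    moreover have "f \<noteq> {}" using that IF fo_self unfolding F_def' by blast
    then have "card f \<noteq> 0" using fin_face that IF by auto
    ultimately show ?thesis by linarith
  qed
  have nc1: "\<not> (\<exists>T\<in>I. card T = 3 \<and> share_side \<alpha> T Ext)" using neg unfolding I_def by blast
  have nc2: "\<not> (\<exists>T1\<in>I. \<exists>T2\<in>I. T1 \<noteq> T2 \<and> card T1 = 3 \<and> card T2 = 3 \<and> share_side \<alpha> T1 T2)"
    using neg unfolding I_def by blast
  have nc3: "\<not> (\<exists>Q\<in>I. \<exists>T\<in>I. card Q = 4 \<and> card T = 3 \<and> share_side \<alpha> Q T)"
    using neg unfolding I_def by blast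
  define XP where "XP P = {d \<in> P. fo (\<alpha> d) \<in> I \<and> card (fo (\<alpha> d)) = 3}" for P
  have nc4: "\<not> (\<exists>P\<in>I. card P = 5 \<and> card (XP P) \<ge> 4)"
    using neg unfolding I_def XP_def fo_def by blast
  define Tr where "Tr = {f\<in>I. card f = 3}"
  define Bg where "Bg = {f\<in>I. 5 \<le> card f}"
  have finTr: "finite Tr" "finite Bg" using finI unfolding Tr_def Bg_def by auto
  have key: "\<alpha> d \<in> XP (fo (\<alpha> d)) \<and> fo (\<alpha> d) \<in> Bg" if T: "T \<in> Tr" and dT: "d \<in> T" for T d
  proof -
    have TI: "T \<in> I" and T3: "card T = 3" using T unfolding Tr_def by auto
    have TF: "T \<in> F" using TI IF by blast
    have dD: "d \<in> D" using FD[OF TF] dT by blast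
    have Tfo: "T = fo d" using face_rep[OF TF dT] .
    have adD: "\<alpha> d \<in> D" using c(2) dD by (auto simp: bij_betw_def)
    let ?G = "fo (\<alpha> d)"
    have GF: "?G \<in> F" unfolding F_def' using adD by blast
    have GExt: "?G \<noteq> Ext"
    proof
      assume "?G = Ext"
      then have "share_side \<alpha> T Ext" unfolding share_side_def using dT fo_self by metis
      then show False using nc1 TI T3 by blast
    qed
    have GI: "?G \<in> I" using GF GExt unfolding I_def F_def inner_faces_def by blast
    have ss1: "share_side \<alpha> T ?G" unfolding share_side_def using dT fo_self by blast
    have ss2: "share_side \<alpha> ?G T" unfolding share_side_def using dT fo_self c(6)[OF dD] by metis
    have "card ?G \<noteq> 3"
    proof
      assume G3: "card ?G = 3"
      show False
      proof (cases "?G = T")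
        case True
        then have "\<alpha> d \<in> orb (\<sigma> \<circ> \<alpha>) d" using fo_self Tfo fo_orb by metis
        then show False using tri_no_self[OF lt dD] T3 Tfo fo_orb by simp
      next
        case False
        then show False using nc2 TI GI T3 G3 ss1 by metis
      qed
    qed
    moreover have "card ?G \<noteq> 4" using nc3 GI TI T3 ss2 by blast
    ultimately have "5 \<le> card ?G" using I3[OF GI] by linarith
    then have GB: "?G \<in> Bg" unfolding Bg_def using GI by blast
    have "fo (\<alpha> (\<alpha> d)) = T" using c(6)[OF dD] Tfo by simp
    then have "\<alpha> d \<in> XP ?G" unfolding XP_def using fo_self TI T3 by simp
    then show ?thesis using GB by blast
  qed
  have TrF: "Tr \<subseteq> F" "Bg \<subseteq> F" using IF unfolding Tr_def Bg_def by auto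
  have pwTr: "pairwise disjnt Tr"
  proof (rule pairwiseI)
    fix A B assume "A \<in> Tr" "B \<in> Tr" "A \<noteq> B"
    then have "A \<inter> B = {}" using Fdisj TrF(1) by blast
    then show "disjnt A B" unfolding disjnt_def .
  qed
  have finTrA: "finite A" if AT: "A \<in> Tr" for A using fin_face AT TrF(1) by blast
  have cTr: "card (\<Union>Tr) = 3 * card Tr"
  proof -
    have "card (\<Union>Tr) = (\<Sum>T\<in>Tr. card T)" using card_Union_disjoint[OF pwTr finTrA] by blast
    also have "\<dots> = (\<Sum>T\<in>Tr. 3)" by (rule sum.cong) (simp_all add: Tr_def)
    also have "\<dots> = 3 * card Tr" by simp
    finally show ?thesis .
  qed
  have XPsub: "XP P \<subseteq> P" for P unfolding XP_def by blast
  have finXP: "\<forall>P\<in>Bg. finite (XP P)"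
  proof
    fix P assume "P \<in> Bg" then have "finite P" using fin_face TrF(2) by blast
    then show "finite (XP P)" using XPsub finite_subset by blast
  qed
  have disjXP: "\<forall>P\<in>Bg. \<forall>Q\<in>Bg. P \<noteq> Q \<longrightarrow> XP P \<inter> XP Q = {}"
  proof (intro ballI impI)
    fix P Q assume "P \<in> Bg" "Q \<in> Bg" "P \<noteq> Q"
    then have "P \<inter> Q = {}" using Fdisj TrF(2) by blast
    then show "XP P \<inter> XP Q = {}" using XPsub[of P] XPsub[of Q] by blast
  qed
  define X where "X = (\<Union>P\<in>Bg. XP P)"
  have finX: "finite X" unfolding X_def using finTr(2) finXP by blast
  have cX: "card X = (\<Sum>P\<in>Bg. card (XP P))"
    unfolding X_def using card_UN_disjoint[OF finTr(2) finXP disjXP] .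
  have UD: "\<Union>Tr \<subseteq> D" using FD TrF(1) by blast
  have injA: "inj_on \<alpha> D" using c(2) unfolding bij_betw_def by blast
  have "card (\<Union>Tr) \<le> card X"
  proof (rule card_inj_on_le[of \<alpha>])
    show "inj_on \<alpha> (\<Union>Tr)" using inj_on_subset[OF injA UD] .
    show "\<alpha> ` \<Union>Tr \<subseteq> X"
    proof
      fix y assume "y \<in> \<alpha> ` \<Union>Tr"
      then obtain d T where dT: "T \<in> Tr" "d \<in> T" "y = \<alpha> d" by blast
      have "\<alpha> d \<in> XP (fo (\<alpha> d)) \<and> fo (\<alpha> d) \<in> Bg" using key[OF dT(1) dT(2)] .
      then show "y \<in> X" unfolding X_def using dT(3) by blast
    qed
    show "finite X" by (rule finX)
  qed
  then have "3 * card Tr \<le> (\<Sum>P\<in>Bg. card (XP P))" using cTr cX by simp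
  then have "int (3 * card Tr) \<le> int (\<Sum>P\<in>Bg. card (XP P))" by (simp only: of_nat_le_iff)
  then have tri_le: "3 * int (card Tr) \<le> (\<Sum>P\<in>Bg. int (card (XP P)))"
    by (simp add: of_nat_sum)
  have xp_le: "int (card (XP P)) \<le> 3 * int (card P) - 12" if PB: "P \<in> Bg" for P
  proof (cases "card P = 5")
    case True
    have PI: "P \<in> I" using PB unfolding Bg_def by blast
    have "\<not> 4 \<le> card (XP P)" using nc4 PI True by blast
    then show ?thesis using True by simp
  next
    case False
    have "finite P" using fin_face TrF(2) PB by blast
    then have "card (XP P) \<le> card P" using XPsub card_mono by blast
    moreover have "5 \<le> card P" using PB unfolding Bg_def by blast
    ultimately show ?thesis using False by simp
  qed
  have "(\<Sum>P\<in>Bg. int (card (XP P))) \<le> (\<Sum>P\<in>Bg. 3 * int (card P) - 12)"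
    using xp_le by (rule sum_mono)
  also have "\<dots> = 3 * (\<Sum>P\<in>Bg. int (card P) - 4)"
    by (simp add: sum_distrib_left right_diff_distrib)
  finally have ineq: "int (card Tr) \<le> (\<Sum>P\<in>Bg. int (card P) - 4)"
    using tri_le by linarith
  have "(\<Sum>f\<in>I. 4 - int (card f))
      = (\<Sum>f\<in>I. (if card f = 3 then 1 else 0) - (if 5 \<le> card f then int (card f) - 4 else 0))"
  proof (rule sum.cong)
    fix f assume "f \<in> I" then have "card f \<ge> 3" by (rule I3)
    then show "4 - int (card f) = (if card f = 3 then 1 else 0) - (if 5 \<le> card f then int (card f) - 4 else 0)"
      by auto
  qed simp
  also have "\<dots> = (\<Sum>f\<in>I. (if card f = 3 then 1 else 0)) - (\<Sum>f\<in>I. (if 5 \<le> card f then int (card f) - 4 else 0))"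
    by (rule sum_subtractf)
  also have "(\<Sum>f\<in>I. (if card f = 3 then 1 else 0)) = (\<Sum>f\<in>Tr. (1::int))"
    unfolding Tr_def using sum.inter_filter[OF finI, of "\<lambda>_. 1::int" "\<lambda>f. card f = 3"] by simp
  also have "(\<Sum>f\<in>I. (if 5 \<le> card f then int (card f) - 4 else 0)) = (\<Sum>P\<in>Bg. int (card P) - 4)"
    unfolding Bg_def using sum.inter_filter[OF finI, of "\<lambda>f. int (card f) - 4" "\<lambda>f. 5 \<le> card f"] by simp
  finally have "(\<Sum>f\<in>I. 4 - int (card f)) \<le> 0" using ineq by simp
  then show False using euler_count[OF lt] unfolding I_def by simp
qed


end
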